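(* Let $P$ be an optimal planning problem that has a feasible solution and whose optimal cost $C^*$ is attained. Let $A$ be a probabilistically complete randomized feasible planner which is well-behaved and exponentially convergent. Let AO-$A$ denote the procedure that runs $A$ on $P_\infty$ to obtain $y_0$, sets $c_0=C(y_0)$, and then for $i=1,2,\dots$ indefinitely runs $A$ on $P_{c_{i-1}}$ to obtain $y_i$ and sets $c_i=C(y_i)$. For $t\ge 0$ let $c(t)$ be the cost of the best path found by AO-$A$ within total running time $t$. Then AO-$A$ is asymptotically optimal in total running time: for every $\epsilon>0$, $\Pr\big(c(t)-C^*\ge\epsilon\big)\to0$ as $t\to\infty$, and hence (as $c(t)$ is nonincreasing) $c(t)\to C^*$ with probability 1.
   Context: A feasible kinodynamic planning problem asks for $S\ge0$, $y:[0,S]\to X$, $u:[0,S]\to U$ with $y(0)=x_I$, $y(S)\in G$, $y(s)\in F$, $u(s)\in B(y(s))$, $y'(s)=D(y(s),u(s))$ for all $s$. An optimal planning problem $P$ also specifies an incremental cost $L$ and terminal cost $\Phi$ and minimizes $C(y)=\int_0^S L(y(s),u(s))ds+\Phi(y(S))$ over feasible solutions, with minimum $C^*$. For $\bar c\in\mathbb{R}\cup\{\infty\}$, $P_{\bar c}$ is the feasible kinodynamic problem in state-cost space (augmented state $(x,c)$, start $(x_I,0)$, dynamics $x'=D(x,u)$, $c'=L(x,u)$, goal $G_{\bar c}=\{(x,c):x\in G,\ c+\Phi(x)\le\bar c\}$) whose solutions are exactly the feasible trajectories of $P$ with $C(y)\le\bar c$. A planner is probabilistically complete if, when a solution exists,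 the probability that it has found one tends to 1 as planning time grows. $A$ is well-behaved if (1) whenever a feasible solution exists and $\bar c>C^*$, $A$ on $P_{\bar c}$ terminates in finite time, and (2) there is $w>0$ such that for every cost bound $\bar c$ the returned solution satisfies $E[C(y)-C^*\mid\bar c]\le(1-w)(\bar c-C^* )$. $A$ is exponentially convergent if, writing $f_{\bar c}(t)$ for the probability that $A$ run on $P_{\bar c}$ has not found a solution after time $t$, for every $\epsilon>0$ there are constants $\alpha_\epsilon,\beta_\epsilon>0$ with $f_{\bar c}(t)\le\min(1,\alpha_\epsilon e^{-\beta_\epsilon t})$ for all $t\ge0$ and all $\bar c\ge C^*+\epsilon$. *)

theory Defs
  imports "HOL-Probability.Probability"
begin

record ('x, 'u) kdp =
  st_space   :: "'x set"
  ctrl_space :: "'u set"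
  x_init     :: 'x
  goal_set   :: "'x set"
  free_set   :: "'x set"
  adm_ctrl   :: "'x \<Rightarrow> 'u set"
  dyn        :: "'x \<Rightarrow> 'u \<Rightarrow> 'x"
  inc_cost   :: "'x \<Rightarrow> 'u \<Rightarrow> real"
  term_cost  :: "'x \<Rightarrow> real"

text \<open>A trajectory (S, y, u): duration S, state path y, control path u.\<close>
type_synonym ('x, 'u) traj = "real \<times> (real \<Rightarrow> 'x) \<times> (real \<Rightarrow> 'u)"

definition feasible :: "('x::real_normed_vector, 'u) kdp \<Rightarrow> ('x, 'u) traj \<Rightarrow> bool" where
  "feasible P \<tau> = (case \<tau> of (S, y, u) \<Rightarrow>
     S \<ge> 0 \<and> y 0 = x_init P \<and> y S \<in> goal_set P \<and>
     (\<forall>s\<in>{0..S}. y s \<in> st_space P \<and> y s \<in> free_set P \<and>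
        u s \<in> ctrl_space P \<and> u s \<in> adm_ctrl P (y s) \<and>
        (y has_vector_derivative dyn P (y s) (u s)) (at s within {0..S})))"

definition cost :: "('x::real_normed_vector, 'u) kdp \<Rightarrow> ('x, 'u) traj \<Rightarrow> real" where
  "cost P \<tau> = (case \<tau> of (S, y, u) \<Rightarrow>
     integral {0..S} (\<lambda>s. inc_cost P (y s) (u s)) + term_cost P (y S))"

definition optimal_cost :: "('x::real_normed_vector, 'u) kdp \<Rightarrow> real" where
  "optimal_cost P = Inf (cost P ` {\<tau>. feasible P \<tau>})"

definition optimum_attained :: "('x::real_normed_vector, 'u) kdp \<Rightarrow> bool" where
  "optimum_attained P \<longleftrightarrow>
     (\<exists>\<tau>. feasible P \<tau> \<and> (\<forall>\<tau>'. feasible P \<tau>' \<longrightarrow> cost P \<tau> \<le> cost P \<tau>'))"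

definition solves_bounded :: "('x::real_normed_vector, 'u) kdp \<Rightarrow> ereal \<Rightarrow> ('x, 'u) traj \<Rightarrow> bool" where
  "solves_bounded P cbar \<tau> \<longleftrightarrow> feasible P \<tau> \<and> ereal (cost P \<tau>) \<le> cbar"

text \<open>A randomized planner A is modelled by a probability space \<Omega> of random seeds
  and a function run: given the cost bound cbar (i.e. the problem P_cbar) and a seed w,
  run cbar w = (T, y) where T \<in> [0,\<infinity>] is the running time (\<infinity> = never terminates)
  and y is the returned trajectory (meaningful only if T < \<infinity>).\<close>

definition found_by :: "('x::real_normed_vector, 'u) kdp \<Rightarrow> (ereal \<Rightarrow> 'w \<Rightarrow> ennreal \<times> ('x, 'u) traj)
    \<Rightarrow> ereal \<Rightarrow> real \<Rightarrow> 'w \<Rightarrow> bool" where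
  "found_by P run cbar t w \<longleftrightarrow> fst (run cbar w) \<le> ennreal t \<and> solves_bounded P cbar (snd (run cbar w))"

definition not_found_prob :: "('x::real_normed_vector, 'u) kdp \<Rightarrow> 'w measure
    \<Rightarrow> (ereal \<Rightarrow> 'w \<Rightarrow> ennreal \<times> ('x, 'u) traj) \<Rightarrow> ereal \<Rightarrow> real \<Rightarrow> real" where
  "not_found_prob P \<Omega> run cbar t = measure \<Omega> {w \<in> space \<Omega>. \<not> found_by P run cbar t w}"

definition randomized_feasible_planner :: "('x::real_normed_vector, 'u) kdp \<Rightarrow> 'w measure
    \<Rightarrow> (ereal \<Rightarrow> 'w \<Rightarrow> ennreal \<times> ('x, 'u) traj) \<Rightarrow> bool" where
  "randomized_feasible_planner P \<Omega> run \<longleftrightarrow>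
     prob_space \<Omega> \<and>
     (\<lambda>p. fst (run (fst p) (snd p))) \<in> borel_measurable (borel \<Otimes>\<^sub>M \<Omega>) \<and>
     (\<lambda>p. cost P (snd (run (fst p) (snd p)))) \<in> borel_measurable (borel \<Otimes>\<^sub>M \<Omega>) \<and>
     (\<forall>cbar. AE w in \<Omega>. fst (run cbar w) < \<infinity> \<longrightarrow> solves_bounded P cbar (snd (run cbar w)))"

definition prob_complete :: "('x::real_normed_vector, 'u) kdp \<Rightarrow> 'w measure
    \<Rightarrow> (ereal \<Rightarrow> 'w \<Rightarrow> ennreal \<times> ('x, 'u) traj) \<Rightarrow> bool" where
  "prob_complete P \<Omega> run \<longleftrightarrow>
     (\<forall>cbar. (\<exists>\<tau>. solves_bounded P cbar \<tau>) \<longrightarrow>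
        ((\<lambda>t. measure \<Omega> {w \<in> space \<Omega>. found_by P run cbar t w}) \<longlongrightarrow> 1) at_top)"

definition well_behaved :: "('x::real_normed_vector, 'u) kdp \<Rightarrow> 'w measure
    \<Rightarrow> (ereal \<Rightarrow> 'w \<Rightarrow> ennreal \<times> ('x, 'u) traj) \<Rightarrow> bool" where
  "well_behaved P \<Omega> run \<longleftrightarrow>
     (\<forall>cbar. (\<exists>\<tau>. feasible P \<tau>) \<and> ereal (optimal_cost P) < cbar \<longrightarrow>
        (AE w in \<Omega>. fst (run cbar w) < \<infinity>)) \<and>
     (\<exists>wt>0. \<forall>c::real. optimal_cost P < c \<longrightarrow>
        (\<integral>\<^sup>+ v. ennreal (cost P (snd (run (ereal c) v)) - optimal_cost P) \<partial>\<Omega>)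
          \<le> ennreal ((1 - wt) * (c - optimal_cost P)))"

definition exp_convergent :: "('x::real_normed_vector, 'u) kdp \<Rightarrow> 'w measure
    \<Rightarrow> (ereal \<Rightarrow> 'w \<Rightarrow> ennreal \<times> ('x, 'u) traj) \<Rightarrow> bool" where
  "exp_convergent P \<Omega> run \<longleftrightarrow>
     (\<forall>\<epsilon>>0. \<exists>\<alpha>>0. \<exists>\<beta>>0. \<forall>cbar. ereal (optimal_cost P + \<epsilon>) \<le> cbar \<longrightarrow>
        (\<forall>t\<ge>0. not_found_prob P \<Omega> run cbar t \<le> min 1 (\<alpha> * exp (- \<beta> * t))))"

text \<open>Each run i of AO-A uses a fresh independent seed \<omega> i.  The bound for run 0 is \<infinity>;
  the bound for run i+1 is the cost c_i of the path y_i returned by run i.\<close>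
primrec ao_bound :: "('x::real_normed_vector, 'u) kdp \<Rightarrow> (ereal \<Rightarrow> 'w \<Rightarrow> ennreal \<times> ('x, 'u) traj)
    \<Rightarrow> nat \<Rightarrow> (nat \<Rightarrow> 'w) \<Rightarrow> ereal" where
  "ao_bound P run 0 \<omega> = \<infinity>"
| "ao_bound P run (Suc i) \<omega> = ereal (cost P (snd (run (ao_bound P run i \<omega>) (\<omega> i))))"

definition ao_finish :: "('x::real_normed_vector, 'u) kdp \<Rightarrow> (ereal \<Rightarrow> 'w \<Rightarrow> ennreal \<times> ('x, 'u) traj)
    \<Rightarrow> nat \<Rightarrow> (nat \<Rightarrow> 'w) \<Rightarrow> ennreal" where
  "ao_finish P run i \<omega> = (\<Sum>j\<le>i. fst (run (ao_bound P run j \<omega>) (\<omega> j)))"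

text \<open>c(t): cost of the best path found by AO-A within total running time t (\<infinity> if none).\<close>
definition ao_best :: "('x::real_normed_vector, 'u) kdp \<Rightarrow> (ereal \<Rightarrow> 'w \<Rightarrow> ennreal \<times> ('x, 'u) traj)
    \<Rightarrow> real \<Rightarrow> (nat \<Rightarrow> 'w) \<Rightarrow> ereal" where
  "ao_best P run t \<omega> = Inf {ereal (cost P (snd (run (ao_bound P run i \<omega>) (\<omega> i)))) | i.
                            ao_finish P run i \<omega> \<le> ennreal t}"

end

theory Submission
  imports Defs
begin



primrec bnd :: "('x::real_normed_vector, 'u) kdp \<Rightarrow> (ereal \<Rightarrow> 'w \<Rightarrow> ennreal \<times> ('x, 'u) traj)
    \<Rightarrow> ereal \<Rightarrow> nat \<Rightarrow> (nat \<Rightarrow> 'w) \<Rightarrow> ereal" where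
  "bnd P run b 0 \<omega> = b"
| "bnd P run b (Suc i) \<omega> = ereal (cost P (snd (run (bnd P run b i \<omega>) (\<omega> i))))"

lemma bnd_front:
  "bnd P run b (Suc i) \<omega> = bnd P run (ereal (cost P (snd (run b (\<omega> 0))))) i (\<lambda>k. \<omega> (Suc k))"
  by (induction i) auto

lemma ao_bound_bnd: "ao_bound P run i \<omega> = bnd P run \<infinity> i \<omega>"
  by (induction i) auto

lemma decomp:
  assumes "prob_space M" and A: "A \<in> sets (PiM UNIV (\<lambda>_::nat. M))"
  shows "emeasure (PiM UNIV (\<lambda>_::nat. M)) A =
    (\<integral>\<^sup>+ s. emeasure (PiM UNIV (\<lambda>_::nat. M)) {\<omega>' \<in> space (PiM UNIV (\<lambda>_::nat. M)). case_nat s \<omega>' \<in> A} \<partial>M)"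
proof -
  interpret prob_space M by fact
  interpret S: sequence_space M ..
  interpret P: pair_sigma_finite M S.S ..
  let ?f = "\<lambda>(s, \<omega>). case_nat s \<omega> :: nat \<Rightarrow> 'a"
  have fm: "?f \<in> measurable (M \<Otimes>\<^sub>M S.S) S.S" by measurable
  have "emeasure S.S A = emeasure (distr (M \<Otimes>\<^sub>M S.S) S.S ?f) A" by (simp add: S.PiM_iter)
  also have "\<dots> = emeasure (M \<Otimes>\<^sub>M S.S) (?f -` A \<inter> space (M \<Otimes>\<^sub>M S.S))"
    by (rule emeasure_distr[OF fm A])
  also have "\<dots> = (\<integral>\<^sup>+ s. emeasure S.S (Pair s -` (?f -` A \<inter> space (M \<Otimes>\<^sub>M S.S))) \<partial>M)"
    by (rule S.emeasure_pair_measure_alt) (use fm A in measurable)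
  also have "\<dots> = (\<integral>\<^sup>+ s. emeasure S.S {\<omega>' \<in> space S.S. case_nat s \<omega>' \<in> A} \<partial>M)"
    by (intro nn_integral_cong arg_cong2[where f=emeasure] refl) (auto simp: space_pair_measure)
  finally show ?thesis .
qed

locale aoa =
  fixes P :: "('x::real_normed_vector, 'u) kdp" and \<Omega> :: "'w measure"
    and run :: "ereal \<Rightarrow> 'w \<Rightarrow> ennreal \<times> ('x, 'u) traj"
  assumes ps: "prob_space \<Omega>"
    and Tm: "(\<lambda>p. fst (run (fst p) (snd p))) \<in> borel_measurable (borel \<Otimes>\<^sub>M \<Omega>)"
    and Cm: "(\<lambda>p. cost P (snd (run (fst p) (snd p)))) \<in> borel_measurable (borel \<Otimes>\<^sub>M \<Omega>)"
begin

abbreviation "SS \<equiv> PiM UNIV (\<lambda>_::nat. \<Omega>)"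

lemma Tm_comp[measurable (raw)]:
  "f \<in> measurable M borel \<Longrightarrow> g \<in> measurable M \<Omega> \<Longrightarrow> (\<lambda>x. fst (run (f x) (g x))) \<in> borel_measurable M"
  using measurable_compose[OF measurable_Pair Tm] by simp

lemma Cm_comp[measurable (raw)]:
  "f \<in> measurable M borel \<Longrightarrow> g \<in> measurable M \<Omega> \<Longrightarrow> (\<lambda>x. cost P (snd (run (f x) (g x)))) \<in> borel_measurable M"
  using measurable_compose[OF measurable_Pair Cm] by simp

lemma bnd_meas[measurable]: "(\<lambda>\<omega>. bnd P run b j \<omega>) \<in> borel_measurable SS"
  by (induction j) auto

lemma SSprob: "prob_space SS"
  by (rule prob_space_PiM) (simp add: ps)

lemma space_SS: "x \<in> space SS \<longleftrightarrow> (\<forall>i. x i \<in> space \<Omega>)"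
  by (simp add: space_PiM PiE_iff)

lemma pair_meas: "(\<lambda>\<omega>. (bnd P run b j \<omega>, \<omega> i)) \<in> measurable SS (borel \<Otimes>\<^sub>M \<Omega>)"
  by measurable

lemma pred_comp: "Measurable.pred (borel \<Otimes>\<^sub>M \<Omega>) (\<lambda>p. g (fst p) (snd p)) \<Longrightarrow>
   Measurable.pred SS (\<lambda>\<omega>. g (bnd P run b j \<omega>) (\<omega> i))"
  using measurable_compose[OF pair_meas, of "\<lambda>p. g (fst p) (snd p)"] by simp

lemma step_bound:
  assumes G: "\<And>b. {w \<in> space \<Omega>. g b w} \<in> sets \<Omega>"
    and Gp: "Measurable.pred (borel \<Otimes>\<^sub>M \<Omega>) (\<lambda>p. g (fst p) (snd p))"
    and R: "\<And>b. emeasure \<Omega> {w \<in> space \<Omega>. g b w} \<le> r"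
  shows "emeasure SS {\<omega> \<in> space SS. g (bnd P run b j \<omega>) (\<omega> j)} \<le> r"
proof (induction j arbitrary: b)
  case 0
  have m: "{\<omega> \<in> space SS. g b (\<omega> 0)} \<in> sets SS"
    using G[of b] by measurable
  have "emeasure SS {\<omega> \<in> space SS. g (bnd P run b 0 \<omega>) (\<omega> 0)}
      = (\<integral>\<^sup>+ s. emeasure SS {\<omega>' \<in> space SS. case_nat s \<omega>' \<in> {\<omega> \<in> space SS. g b (\<omega> 0)}} \<partial>\<Omega>)"
    using decomp[OF ps m] by simp
  also have "\<dots> \<le> (\<integral>\<^sup>+ s. indicator {w \<in> space \<Omega>. g b w} s \<partial>\<Omega>)"
  proof (rule nn_integral_mono)
    fix s assume s: "s \<in> space \<Omega>"
    show "emeasure SS {\<omega>' \<in> space SS. case_nat s \<omega>' \<in> {\<omega> \<in> space SS. g b (\<omega> 0)}}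
        \<le> indicator {w \<in> space \<Omega>. g b w} s"
    proof (cases "g b s")
      case True
      then show ?thesis using s prob_space.emeasure_le_1[OF SSprob] by (simp add: indicator_def)
    next
      case False
      then show ?thesis by simp
    qed
  qed
  also have "\<dots> = emeasure \<Omega> {w \<in> space \<Omega>. g b w}" using G[of b] by simp
  also have "\<dots> \<le> r" by (rule R)
  finally show ?case .
next
  case (Suc j)
  let ?c = "\<lambda>s. ereal (cost P (snd (run b s)))"
  have m: "{\<omega> \<in> space SS. g (bnd P run b (Suc j) \<omega>) (\<omega> (Suc j))} \<in> sets SS"
    using pred_comp[OF Gp] by measurable
  have "emeasure SS {\<omega> \<in> space SS. g (bnd P run b (Suc j) \<omega>) (\<omega> (Suc j))}
      = (\<integral>\<^sup>+ s. emeasure SS {\<omega>' \<in> space SS. case_nat s \<omega>' \<in> {\<omega> \<in> space SS. g (bnd P run b (Suc j) \<omega>) (\<omega> (Suc j))}} \<partial>\<Omega>)"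
    using decomp[OF ps m] by simp
  also have "\<dots> = (\<integral>\<^sup>+ s. emeasure SS {\<omega>' \<in> space SS. g (bnd P run (?c s) j \<omega>') (\<omega>' j)} \<partial>\<Omega>)"
  proof (rule nn_integral_cong)
    fix s assume s: "s \<in> space \<Omega>"
    show "emeasure SS {\<omega>' \<in> space SS. case_nat s \<omega>' \<in> {\<omega> \<in> space SS. g (bnd P run b (Suc j) \<omega>) (\<omega> (Suc j))}}
        = emeasure SS {\<omega>' \<in> space SS. g (bnd P run (?c s) j \<omega>') (\<omega>' j)}"
    proof (intro arg_cong2[where f=emeasure] refl Collect_cong conj_cong refl)
      fix \<omega>' assume w: "\<omega>' \<in> space SS"
      have c1: "case_nat s \<omega>' \<in> space SS" using s w unfolding space_SS by (simp split: nat.splits)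
      have c2: "bnd P run b (Suc j) (case_nat s \<omega>') = bnd P run (?c s) j \<omega>'"
        unfolding bnd_front by simp
      show "(case_nat s \<omega>' \<in> {\<omega> \<in> space SS. g (bnd P run b (Suc j) \<omega>) (\<omega> (Suc j))}) =
         g (bnd P run (?c s) j \<omega>') (\<omega>' j)"
        using c1 c2 by simp
    qed
  qed
  also have "\<dots> \<le> (\<integral>\<^sup>+ s. r \<partial>\<Omega>)"
    by (rule nn_integral_mono) (rule Suc.IH)
  also have "\<dots> = r" using prob_space.emeasure_space_1[OF ps] by simp
  finally show ?case .
qed

end


context aoa begin

definition Aset :: "real \<Rightarrow> real \<Rightarrow> ereal \<Rightarrow> nat \<Rightarrow> (nat \<Rightarrow> 'w) set" where
  "Aset C \<epsilon> b n = {\<omega> \<in> space SS. \<forall>j<n. ereal (C + \<epsilon>) \<le> bnd P run b (Suc j) \<omega>}"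

lemma Aset_sets[measurable]: "Aset C \<epsilon> b n \<in> sets SS"
  unfolding Aset_def by measurable

lemma Aset_front:
  assumes s: "s \<in> space \<Omega>"
  shows "{\<omega>' \<in> space SS. case_nat s \<omega>' \<in> Aset C \<epsilon> b (Suc n)} =
    (if ereal (C + \<epsilon>) \<le> ereal (cost P (snd (run b s))) then Aset C \<epsilon> (ereal (cost P (snd (run b s)))) n else {})"
proof -
  have "case_nat s \<omega>' \<in> Aset C \<epsilon> b (Suc n) \<longleftrightarrow>
      ereal (C + \<epsilon>) \<le> ereal (cost P (snd (run b s))) \<and> \<omega>' \<in> Aset C \<epsilon> (ereal (cost P (snd (run b s)))) n"
    if w: "\<omega>' \<in> space SS" for \<omega>'
  proof -
    have c1: "case_nat s \<omega>' \<in> space SS" using s w unfolding space_SS by (simp split: nat.splits)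
    have c2: "\<And>j. bnd P run b (Suc (Suc j)) (case_nat s \<omega>') = bnd P run (ereal (cost P (snd (run b s)))) (Suc j) \<omega>'"
      unfolding bnd_front[of P run b "Suc _"] by simp
    have c3: "bnd P run b (Suc 0) (case_nat s \<omega>') = ereal (cost P (snd (run b s)))" by simp
    have "(\<forall>j<Suc n. ereal (C + \<epsilon>) \<le> bnd P run b (Suc j) (case_nat s \<omega>')) \<longleftrightarrow>
        ereal (C + \<epsilon>) \<le> bnd P run b (Suc 0) (case_nat s \<omega>') \<and>
        (\<forall>j<n. ereal (C + \<epsilon>) \<le> bnd P run b (Suc (Suc j)) (case_nat s \<omega>'))"
      by (auto simp: less_Suc_eq_0_disj simp del: bnd.simps)
    moreover have "\<omega>' \<in> Aset C \<epsilon> (ereal (cost P (snd (run b s)))) n \<longleftrightarrow>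
        (\<forall>j<n. ereal (C + \<epsilon>) \<le> bnd P run (ereal (cost P (snd (run b s)))) (Suc j) \<omega>')"
      using w by (simp add: Aset_def del: bnd.simps)
    moreover have "case_nat s \<omega>' \<in> Aset C \<epsilon> b (Suc n) \<longleftrightarrow>
        (\<forall>j<Suc n. ereal (C + \<epsilon>) \<le> bnd P run b (Suc j) (case_nat s \<omega>'))"
      using c1 by (simp add: Aset_def del: bnd.simps)
    ultimately show ?thesis by (simp only: c2 c3)
  qed
  moreover have "{\<omega>' \<in> space SS. case_nat s \<omega>' \<in> Aset C \<epsilon> b (Suc n)} \<subseteq> space SS" by auto
  moreover have "Aset C \<epsilon> (ereal (cost P (snd (run b s)))) n \<subseteq> space SS" by (auto simp: Aset_def)
  ultimately show ?thesis by auto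
qed

lemma A_bound:
  assumes eps: "0 < \<epsilon>" and q: "0 \<le> q"
    and WB: "\<And>c::real. C < c \<Longrightarrow> (\<integral>\<^sup>+ v. ennreal (cost P (snd (run (ereal c) v)) - C) \<partial>\<Omega>) \<le> ennreal (q * (c - C))"
  shows "C + \<epsilon> \<le> b \<Longrightarrow> emeasure SS (Aset C \<epsilon> (ereal b) n) \<le> ennreal (q ^ n * (b - C) / \<epsilon>)"
proof (induction n arbitrary: b)
  case 0
  have "emeasure SS (Aset C \<epsilon> (ereal b) 0) \<le> 1"
    by (rule prob_space.emeasure_le_1[OF SSprob])
  also have "1 \<le> ennreal (q ^ 0 * (b - C) / \<epsilon>)"
    using 0 eps by (simp add: field_simps ennreal_1[symmetric] del: ennreal_1)
  finally show ?case .
next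
  case (Suc n)
  let ?c = "\<lambda>s. cost P (snd (run (ereal b) s))"
  have "emeasure SS (Aset C \<epsilon> (ereal b) (Suc n)) =
      (\<integral>\<^sup>+ s. emeasure SS {\<omega>' \<in> space SS. case_nat s \<omega>' \<in> Aset C \<epsilon> (ereal b) (Suc n)} \<partial>\<Omega>)"
    by (rule decomp[OF ps Aset_sets])
  also have "\<dots> \<le> (\<integral>\<^sup>+ s. ennreal (q ^ n / \<epsilon>) * ennreal (?c s - C) \<partial>\<Omega>)"
  proof (rule nn_integral_mono)
    fix s assume s: "s \<in> space \<Omega>"
    show "emeasure SS {\<omega>' \<in> space SS. case_nat s \<omega>' \<in> Aset C \<epsilon> (ereal b) (Suc n)}
        \<le> ennreal (q ^ n / \<epsilon>) * ennreal (?c s - C)"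
    proof (cases "C + \<epsilon> \<le> ?c s")
      case True
      have "emeasure SS {\<omega>' \<in> space SS. case_nat s \<omega>' \<in> Aset C \<epsilon> (ereal b) (Suc n)}
          = emeasure SS (Aset C \<epsilon> (ereal (?c s)) n)"
        using True by (simp add: Aset_front[OF s])
      also have "\<dots> \<le> ennreal (q ^ n * (?c s - C) / \<epsilon>)" by (rule Suc.IH[OF True])
      also have "\<dots> = ennreal (q ^ n / \<epsilon>) * ennreal (?c s - C)"
        using True eps q by (simp add: ennreal_mult[symmetric])
      finally show ?thesis .
    next
      case False
      then show ?thesis by (simp add: Aset_front[OF s])
    qed
  qed
  also have "\<dots> = ennreal (q ^ n / \<epsilon>) * (\<integral>\<^sup>+ s. ennreal (?c s - C) \<partial>\<Omega>)"
    by (rule nn_integral_cmult) measurable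
  also have "\<dots> \<le> ennreal (q ^ n / \<epsilon>) * ennreal (q * (b - C))"
    using Suc.prems eps by (intro mult_left_mono WB) auto
  also have "\<dots> = ennreal (q ^ Suc n * (b - C) / \<epsilon>)"
    using Suc.prems eps q by (simp add: ennreal_mult[symmetric])
  finally show ?case .
qed

end


context aoa begin

lemma A_inf:
  assumes eps: "0 < \<epsilon>" and q: "0 \<le> q"
    and WB: "\<And>c::real. C < c \<Longrightarrow> (\<integral>\<^sup>+ v. ennreal (cost P (snd (run (ereal c) v)) - C) \<partial>\<Omega>) \<le> ennreal (q * (c - C))"
  shows "emeasure SS (Aset C \<epsilon> \<infinity> (Suc n)) \<le>
    emeasure \<Omega> {s \<in> space \<Omega>. M < cost P (snd (run \<infinity> s))} + ennreal (q ^ n * (M - C) / \<epsilon>)"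
proof -
  let ?c = "\<lambda>s. cost P (snd (run \<infinity> s))"
  let ?D = "{s \<in> space \<Omega>. M < ?c s}"
  have Dm: "?D \<in> sets \<Omega>" by measurable
  have "emeasure SS (Aset C \<epsilon> \<infinity> (Suc n)) =
      (\<integral>\<^sup>+ s. emeasure SS {\<omega>' \<in> space SS. case_nat s \<omega>' \<in> Aset C \<epsilon> \<infinity> (Suc n)} \<partial>\<Omega>)"
    by (rule decomp[OF ps Aset_sets])
  also have "\<dots> \<le> (\<integral>\<^sup>+ s. indicator ?D s + ennreal (q ^ n * (M - C) / \<epsilon>) \<partial>\<Omega>)"
  proof (rule nn_integral_mono)
    fix s assume s: "s \<in> space \<Omega>"
    show "emeasure SS {\<omega>' \<in> space SS. case_nat s \<omega>' \<in> Aset C \<epsilon> \<infinity> (Suc n)}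
        \<le> indicator ?D s + ennreal (q ^ n * (M - C) / \<epsilon>)"
    proof (cases "C + \<epsilon> \<le> ?c s")
      case True
      have e: "emeasure SS {\<omega>' \<in> space SS. case_nat s \<omega>' \<in> Aset C \<epsilon> \<infinity> (Suc n)}
          = emeasure SS (Aset C \<epsilon> (ereal (?c s)) n)"
        using True by (simp add: Aset_front[OF s])
      show ?thesis
      proof (cases "M < ?c s")
        case True
        have "emeasure SS (Aset C \<epsilon> (ereal (?c s)) n) \<le> 1"
          by (rule prob_space.emeasure_le_1[OF SSprob])
        also have "1 \<le> indicator ?D s + ennreal (q ^ n * (M - C) / \<epsilon>)"
          using True s by (simp add: indicator_def)
        finally show ?thesis using e by simp
      next
        case False
        have "emeasure SS (Aset C \<epsilon> (ereal (?c s)) n) \<le> ennreal (q ^ n * (?c s - C) / \<epsilon>)"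
          by (rule A_bound[OF eps q WB True])
        also have "\<dots> \<le> ennreal (q ^ n * (M - C) / \<epsilon>)"
          using False eps q by (intro ennreal_leI divide_right_mono mult_left_mono) auto
        also have "\<dots> \<le> indicator ?D s + ennreal (q ^ n * (M - C) / \<epsilon>)" by simp
        finally show ?thesis using e by simp
      qed
    next
      case False
      then show ?thesis by (simp add: Aset_front[OF s])
    qed
  qed
  also have "\<dots> = (\<integral>\<^sup>+ s. indicator ?D s \<partial>\<Omega>) + (\<integral>\<^sup>+ s. ennreal (q ^ n * (M - C) / \<epsilon>) \<partial>\<Omega>)"
    by (rule nn_integral_add) (use Dm in auto)
  also have "\<dots> = emeasure \<Omega> ?D + ennreal (q ^ n * (M - C) / \<epsilon>)"
    using Dm prob_space.emeasure_space_1[OF ps] by simp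
  finally show ?thesis .
qed

lemma A_lim:
  assumes eps: "0 < \<epsilon>" and q: "0 \<le> q" "q < 1"
    and WB: "\<And>c::real. C < c \<Longrightarrow> (\<integral>\<^sup>+ v. ennreal (cost P (snd (run (ereal c) v)) - C) \<partial>\<Omega>) \<le> ennreal (q * (c - C))"
    and eta: "0 < \<eta>"
  shows "\<exists>n. measure SS (Aset C \<epsilon> \<infinity> (Suc n)) < \<eta>"
proof -
  interpret Om: prob_space \<Omega> by (rule ps)
  interpret SSp: prob_space SS by (rule SSprob)
  let ?c = "\<lambda>s. cost P (snd (run \<infinity> s))"
  let ?D = "\<lambda>m::nat. {s \<in> space \<Omega>. real m < ?c s}"
  have "(\<lambda>m. measure \<Omega> (?D m)) \<longlonglongrightarrow> measure \<Omega> (\<Inter>m. ?D m)"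
  proof (rule Lim_measure_decseq)
    show "range ?D \<subseteq> sets \<Omega>" by auto
    show "decseq ?D" by (auto simp: decseq_def)
    show "\<And>i. emeasure \<Omega> (?D i) \<noteq> \<infinity>" by (simp add: Om.emeasure_eq_measure)
  qed
  moreover have "(\<Inter>m. ?D m) = {}"
  proof -
    have "\<not> (\<forall>m::nat. real m < x)" for x :: real
      using reals_Archimedean2[of x] less_asym by blast
    then show ?thesis by auto
  qed
  ultimately have "(\<lambda>m. measure \<Omega> (?D m)) \<longlonglongrightarrow> 0" by simp
  then have "eventually (\<lambda>m. measure \<Omega> (?D m) < \<eta> / 2) sequentially"
    by (rule order_tendstoD(2)) (use eta in simp)
  then obtain m where m: "measure \<Omega> (?D m) < \<eta> / 2"
    by (auto simp: eventually_sequentially)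
  have "(\<lambda>n. q ^ n * ((real m - C) / \<epsilon>)) \<longlonglongrightarrow> 0"
    using q by (intro tendsto_mult_left_zero LIMSEQ_power_zero) auto
  then have "eventually (\<lambda>n. q ^ n * ((real m - C) / \<epsilon>) < \<eta> / 2) sequentially"
    by (rule order_tendstoD(2)) (use eta in simp)
  then obtain n where n: "q ^ n * ((real m - C) / \<epsilon>) < \<eta> / 2"
    by (auto simp: eventually_sequentially)
  let ?x = "q ^ n * ((real m - C) / \<epsilon>)"
  have "emeasure SS (Aset C \<epsilon> \<infinity> (Suc n)) \<le> emeasure \<Omega> (?D m) + ennreal (q ^ n * (real m - C) / \<epsilon>)"
    by (rule A_inf[OF eps q(1) WB])
  also have "\<dots> = ennreal (measure \<Omega> (?D m)) + ennreal ?x"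
    by (simp add: Om.emeasure_eq_measure)
  also have "\<dots> \<le> ennreal (measure \<Omega> (?D m)) + ennreal (max 0 ?x)"
    by (intro add_left_mono ennreal_leI) simp
  also have "\<dots> = ennreal (measure \<Omega> (?D m) + max 0 ?x)"
    by (rule ennreal_plus[symmetric]) auto
  finally have H: "ennreal (measure SS (Aset C \<epsilon> \<infinity> (Suc n))) \<le> ennreal (measure \<Omega> (?D m) + max 0 ?x)"
    by (simp only: SSp.emeasure_eq_measure)
  have "measure SS (Aset C \<epsilon> \<infinity> (Suc n)) \<le> measure \<Omega> (?D m) + max 0 ?x"
    by (rule ennreal_le_iff[THEN iffD1, OF _ H]) auto
  also have "\<dots> < \<eta>"
  proof -
    have "max 0 ?x < \<eta> / 2" using n eta by (simp only: max_less_iff_conj) simp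
    then show ?thesis using m by linarith
  qed
  finally show ?thesis by blast
qed

end



lemma Inf_setcompr_if:
  "Inf {f i | i. Q i} = (INF i. if Q i then f i else (top::'a::complete_lattice))"
proof (rule antisym)
  show "Inf {f i | i. Q i} \<le> (INF i. if Q i then f i else top)"
    by (rule INF_greatest) (auto intro: Inf_lower)
  show "(INF i. if Q i then f i else top) \<le> Inf {f i | i. Q i}"
  proof (rule Inf_greatest)
    fix x assume "x \<in> {f i | i. Q i}"
    then obtain i where "Q i" "x = f i" by auto
    then show "(INF i. if Q i then f i else top) \<le> x"
      by (intro INF_lower2[of i]) auto
  qed
qed

context aoa begin

lemma ao_finish_bnd: "ao_finish P run i \<omega> = (\<Sum>j\<le>i. fst (run (bnd P run \<infinity> j \<omega>) (\<omega> j)))"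
  by (simp add: ao_finish_def ao_bound_bnd)

lemma ao_best_eq: "ao_best P run t \<omega> =
   (INF i. if ao_finish P run i \<omega> \<le> ennreal t then bnd P run \<infinity> (Suc i) \<omega> else \<infinity>)"
  unfolding ao_best_def Inf_setcompr_if by (simp add: ao_bound_bnd top_ereal_def)

lemma ao_best_meas[measurable]: "(\<lambda>\<omega>. ao_best P run t \<omega>) \<in> borel_measurable SS"
  unfolding ao_best_eq ao_finish_bnd by measurable

lemma tail_bound:
  assumes PC: "prob_complete P \<Omega> run" and EX: "\<exists>\<tau>. solves_bounded P b \<tau>"
    and EC: "\<forall>t\<ge>0. not_found_prob P \<Omega> run b t \<le> min 1 (\<alpha> * exp (- \<beta> * t))"
    and s: "0 \<le> s"
  shows "emeasure \<Omega> {w \<in> space \<Omega>. ennreal s < fst (run b w)} \<le> ennreal (\<alpha> * exp (- \<beta> * s))"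
proof -
  interpret Om: prob_space \<Omega> by (rule ps)
  let ?F = "\<lambda>t. {w \<in> space \<Omega>. found_by P run b t w}"
  have "((\<lambda>t. measure \<Omega> (?F t)) \<longlongrightarrow> 1) at_top"
    using PC EX unfolding prob_complete_def by blast
  then have "eventually (\<lambda>t. 0 < measure \<Omega> (?F t)) at_top"
    by (rule order_tendstoD(1)) simp
  then obtain t0 where t0: "\<And>t. t \<ge> t0 \<Longrightarrow> 0 < measure \<Omega> (?F t)"
    by (auto simp: eventually_at_top_linorder)
  let ?t1 = "max t0 s"
  have F1: "?F ?t1 \<in> sets \<Omega>"
    using t0[of ?t1] measure_notin_sets[of "?F ?t1" \<Omega>] by fastforce
  have "?F s = ?F ?t1 \<inter> {w \<in> space \<Omega>. fst (run b w) \<le> ennreal s}"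
  proof -
    have "fst (run b w) \<le> ennreal s \<Longrightarrow> fst (run b w) \<le> ennreal ?t1" for w
      by (rule order_trans) (auto intro: ennreal_leI)
    then show ?thesis unfolding found_by_def by auto
  qed
  also have "\<dots> \<in> sets \<Omega>" using F1 by measurable
  finally have Fs: "?F s \<in> sets \<Omega>" .
  have "emeasure \<Omega> {w \<in> space \<Omega>. ennreal s < fst (run b w)} \<le> emeasure \<Omega> (space \<Omega> - ?F s)"
    by (rule emeasure_mono) (use Fs in \<open>auto simp: found_by_def not_le\<close>)
  also have "\<dots> = ennreal (not_found_prob P \<Omega> run b s)"
    unfolding not_found_prob_def Om.emeasure_eq_measure
    by (intro arg_cong[where f=ennreal] arg_cong[where f="measure \<Omega>"]) auto
  also have "\<dots> \<le> ennreal (\<alpha> * exp (- \<beta> * s))"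
    using EC s by (intro ennreal_leI) auto
  finally show ?thesis .
qed

lemma K_bound:
  assumes PC: "prob_complete P \<Omega> run" and EX: "\<And>b. ereal (C + \<epsilon>) \<le> b \<Longrightarrow> \<exists>\<tau>. solves_bounded P b \<tau>"
    and EC: "\<And>b. ereal (C + \<epsilon>) \<le> b \<Longrightarrow> \<forall>t\<ge>0. not_found_prob P \<Omega> run b t \<le> min 1 (\<alpha> * exp (- \<beta> * t))"
    and s: "0 \<le> s"
  shows "emeasure SS {\<omega> \<in> space SS. ereal (C + \<epsilon>) \<le> bnd P run b j \<omega> \<and>
            ennreal s < fst (run (bnd P run b j \<omega>) (\<omega> j))} \<le> ennreal (\<alpha> * exp (- \<beta> * s))"
proof (rule step_bound[where g = "\<lambda>b w. ereal (C + \<epsilon>) \<le> b \<and> ennreal s < fst (run b w)"])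
  show "\<And>b. {w \<in> space \<Omega>. ereal (C + \<epsilon>) \<le> b \<and> ennreal s < fst (run b w)} \<in> sets \<Omega>" by measurable
  show "Measurable.pred (borel \<Otimes>\<^sub>M \<Omega>) (\<lambda>p. ereal (C + \<epsilon>) \<le> fst p \<and> ennreal s < fst (run (fst p) (snd p)))"
    by measurable
  fix b
  show "emeasure \<Omega> {w \<in> space \<Omega>. ereal (C + \<epsilon>) \<le> b \<and> ennreal s < fst (run b w)} \<le> ennreal (\<alpha> * exp (- \<beta> * s))"
  proof (cases "ereal (C + \<epsilon>) \<le> b")
    case True
    then show ?thesis using tail_bound[OF PC EX[OF True] EC[OF True] s] by simp
  next
    case False
    then show ?thesis by simp
  qed
qed

lemma null_bound:
  assumes RF: "\<And>b. AE w in \<Omega>. fst (run b w) < \<infinity> \<longrightarrow> solves_bounded P b (snd (run b w))"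
    and LB: "\<And>\<tau>. feasible P \<tau> \<Longrightarrow> C \<le> cost P \<tau>"
  shows "emeasure SS {\<omega> \<in> space SS. fst (run (bnd P run b j \<omega>) (\<omega> j)) < \<infinity> \<and>
            cost P (snd (run (bnd P run b j \<omega>) (\<omega> j))) < C} \<le> 0"
proof (rule step_bound[where g = "\<lambda>b w. fst (run b w) < \<infinity> \<and> cost P (snd (run b w)) < C"])
  show "\<And>b. {w \<in> space \<Omega>. fst (run b w) < \<infinity> \<and> cost P (snd (run b w)) < C} \<in> sets \<Omega>" by measurable
  show "Measurable.pred (borel \<Otimes>\<^sub>M \<Omega>) (\<lambda>p. fst (run (fst p) (snd p)) < \<infinity> \<and> cost P (snd (run (fst p) (snd p))) < C)"
    by measurable
  fix b
  have N: "{w \<in> space \<Omega>. fst (run b w) < \<infinity> \<and> cost P (snd (run b w)) < C} \<in> sets \<Omega>" by measurable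
  have "AE w in \<Omega>. \<not> (fst (run b w) < \<infinity> \<and> cost P (snd (run b w)) < C)"
    using RF[of b] by eventually_elim (auto simp: solves_bounded_def dest!: LB)
  then have "emeasure \<Omega> {w \<in> space \<Omega>. fst (run b w) < \<infinity> \<and> cost P (snd (run b w)) < C} = 0"
    by (subst (asm) AE_iff_measurable[OF N]) auto
  then show "emeasure \<Omega> {w \<in> space \<Omega>. fst (run b w) < \<infinity> \<and> cost P (snd (run b w)) < C} \<le> 0" by simp
qed

end



lemma exp_lim:
  fixes N \<alpha> \<beta> :: real
  assumes "0 < N" "0 < \<beta>"
  shows "((\<lambda>t. N * (\<alpha> * exp (- \<beta> * (t / N)))) \<longlongrightarrow> 0) at_top"
proof -
  have "LIM t at_top. (\<beta> / N) * t :> at_top"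
    using assms by (intro filterlim_tendsto_pos_mult_at_top[OF tendsto_const] filterlim_ident) auto
  then have "LIM t at_top. - ((\<beta> / N) * t) :> at_bot"
    by (simp add: filterlim_uminus_at_bot)
  then have "((\<lambda>t. exp (- ((\<beta> / N) * t))) \<longlongrightarrow> 0) at_top"
    by (rule filterlim_compose[OF exp_at_bot])
  then have "((\<lambda>t. N * (\<alpha> * exp (- ((\<beta> / N) * t)))) \<longlongrightarrow> 0) at_top"
    by (intro tendsto_mult_right_zero)
  then show ?thesis by (simp add: field_simps)
qed

context aoa begin

lemma key:
  assumes t: "0 \<le> t" and j: "j \<le> n" and H: "ereal (C + \<epsilon>) \<le> ao_best P run t \<omega>"
    and T: "\<forall>i\<le>j. fst (run (bnd P run \<infinity> i \<omega>) (\<omega> i)) \<le> ennreal (t / real (Suc n))"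
  shows "ereal (C + \<epsilon>) \<le> bnd P run \<infinity> (Suc j) \<omega>"
proof -
  have "ao_finish P run j \<omega> \<le> (\<Sum>i\<le>j. ennreal (t / real (Suc n)))"
    unfolding ao_finish_bnd using T by (intro sum_mono) auto
  also have "\<dots> = ennreal (real (Suc j)) * ennreal (t / real (Suc n))"
    by (simp only: sum_constant card_atMost ennreal_of_nat_eq_real_of_nat)
  also have "\<dots> = ennreal (real (Suc j) * (t / real (Suc n)))"
    by (rule ennreal_mult[symmetric]) (use t in auto)
  also have "\<dots> \<le> ennreal t"
  proof (rule ennreal_leI)
    have "real (Suc j) * (t / real (Suc n)) \<le> real (Suc n) * (t / real (Suc n))"
      using j t by (intro mult_right_mono) auto
    then show "real (Suc j) * (t / real (Suc n)) \<le> t" by simp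
  qed
  finally have fin: "ao_finish P run j \<omega> \<le> ennreal t" .
  have "ao_best P run t \<omega> \<le> bnd P run \<infinity> (Suc j) \<omega>"
    unfolding ao_best_eq by (rule INF_lower2[of j]) (use fin in auto)
  then show ?thesis using H by (rule order_trans[rotated])
qed

lemma incl:
  assumes t: "0 \<le> t" and H: "ereal (C + \<epsilon>) \<le> ao_best P run t \<omega>"
    and notK: "\<forall>j\<le>n. \<not> (ereal (C + \<epsilon>) \<le> bnd P run \<infinity> j \<omega> \<and>
        ennreal (t / real (Suc n)) < fst (run (bnd P run \<infinity> j \<omega>) (\<omega> j)))"
  shows "\<forall>j<Suc n. ereal (C + \<epsilon>) \<le> bnd P run \<infinity> (Suc j) \<omega>"
proof -
  have cl: "j \<le> n \<longrightarrow> (\<forall>i\<le>j. fst (run (bnd P run \<infinity> i \<omega>) (\<omega> i)) \<le> ennreal (t / real (Suc n)))" for j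
  proof (induction j)
    case 0
    show ?case using notK by (auto simp: not_less)
  next
    case (Suc j)
    show ?case
    proof
      assume j: "Suc j \<le> n"
      then have IH: "\<forall>i\<le>j. fst (run (bnd P run \<infinity> i \<omega>) (\<omega> i)) \<le> ennreal (t / real (Suc n))"
        using Suc.IH by simp
      have "ereal (C + \<epsilon>) \<le> bnd P run \<infinity> (Suc j) \<omega>"
        using key[OF t _ H IH] j by simp
      then have "fst (run (bnd P run \<infinity> (Suc j) \<omega>) (\<omega> (Suc j))) \<le> ennreal (t / real (Suc n))"
        using notK j by (auto simp: not_less)
      then show "\<forall>i\<le>Suc j. fst (run (bnd P run \<infinity> i \<omega>) (\<omega> i)) \<le> ennreal (t / real (Suc n))"
        using IH by (auto simp: le_Suc_eq)
    qed
  qed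
  show ?thesis
  proof (intro allI impI)
    fix j assume "j < Suc n"
    then have j: "j \<le> n" by simp
    show "ereal (C + \<epsilon>) \<le> bnd P run \<infinity> (Suc j) \<omega>"
      by (rule key[OF t j H]) (use cl[of j] j in blast)
  qed
qed

end


context aoa begin

lemma part1:
  assumes eps: "0 < \<epsilon>" and q: "0 \<le> q" "q < 1"
    and WB: "\<And>c::real. C < c \<Longrightarrow> (\<integral>\<^sup>+ v. ennreal (cost P (snd (run (ereal c) v)) - C) \<partial>\<Omega>) \<le> ennreal (q * (c - C))"
    and PC: "prob_complete P \<Omega> run"
    and EX: "\<And>b. ereal (C + \<epsilon>) \<le> b \<Longrightarrow> \<exists>\<tau>. solves_bounded P b \<tau>"
    and ab: "0 < \<alpha>" "0 < \<beta>"
    and EC: "\<And>b. ereal (C + \<epsilon>) \<le> b \<Longrightarrow> \<forall>t\<ge>0. not_found_prob P \<Omega> run b t \<le> min 1 (\<alpha> * exp (- \<beta> * t))"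
  shows "((\<lambda>t. measure SS {\<omega> \<in> space SS. ereal (C + \<epsilon>) \<le> ao_best P run t \<omega>}) \<longlongrightarrow> 0) at_top"
proof -
  interpret SSp: prob_space SS by (rule SSprob)
  let ?B = "\<lambda>t. {\<omega> \<in> space SS. ereal (C + \<epsilon>) \<le> ao_best P run t \<omega>}"
  show ?thesis
  proof (rule order_tendstoI)
    fix a :: real assume "a < 0"
    then show "eventually (\<lambda>t. a < measure SS (?B t)) at_top"
      using measure_nonneg[of SS] by (intro always_eventually allI) (meson less_le_trans)
  next
    fix \<eta> :: real assume eta: "0 < \<eta>"
    obtain n where n: "measure SS (Aset C \<epsilon> \<infinity> (Suc n)) < \<eta> / 2"
      using A_lim[OF eps q WB, of "\<eta> / 2"] eta by auto
    let ?g = "\<lambda>t. real (Suc n) * (\<alpha> * exp (- \<beta> * (t / real (Suc n))))"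
    have "eventually (\<lambda>t. ?g t < \<eta> / 2) at_top"
      using exp_lim[of "real (Suc n)" \<beta> \<alpha>] ab eta by (intro order_tendstoD(2)) auto
    moreover have "eventually (\<lambda>t::real. 0 \<le> t) at_top" by (rule eventually_ge_at_top)
    ultimately show "eventually (\<lambda>t. measure SS (?B t) < \<eta>) at_top"
    proof eventually_elim
      case (elim t)
      let ?s = "t / real (Suc n)"
      let ?K = "\<lambda>j. {\<omega> \<in> space SS. ereal (C + \<epsilon>) \<le> bnd P run \<infinity> j \<omega> \<and>
                    ennreal ?s < fst (run (bnd P run \<infinity> j \<omega>) (\<omega> j))}"
      have s0: "0 \<le> ?s" using elim(2) by simp
      have Km: "?K j \<in> sets SS" for j by measurable
      have Um: "(\<Union>j\<in>{..n}. ?K j) \<in> sets SS" using Km by auto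
      have sub: "?B t \<subseteq> Aset C \<epsilon> \<infinity> (Suc n) \<union> (\<Union>j\<in>{..n}. ?K j)"
      proof
        fix \<omega> assume w: "\<omega> \<in> ?B t"
        show "\<omega> \<in> Aset C \<epsilon> \<infinity> (Suc n) \<union> (\<Union>j\<in>{..n}. ?K j)"
        proof (cases "\<exists>j\<le>n. \<omega> \<in> ?K j")
          case True then show ?thesis by auto
        next
          case False
          then have "\<forall>j\<le>n. \<not> (ereal (C + \<epsilon>) \<le> bnd P run \<infinity> j \<omega> \<and>
              ennreal ?s < fst (run (bnd P run \<infinity> j \<omega>) (\<omega> j)))"
            using w by auto
          from incl[OF elim(2) _ this] w show ?thesis by (auto simp: Aset_def)
        qed
      qed
      have m1: "measure SS (?B t) \<le> measure SS (Aset C \<epsilon> \<infinity> (Suc n) \<union> (\<Union>j\<in>{..n}. ?K j))"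
        by (rule SSp.finite_measure_mono[OF sub]) (use Um in auto)
      have m2: "measure SS (Aset C \<epsilon> \<infinity> (Suc n) \<union> (\<Union>j\<in>{..n}. ?K j))
          \<le> measure SS (Aset C \<epsilon> \<infinity> (Suc n)) + measure SS (\<Union>j\<in>{..n}. ?K j)"
        by (rule measure_Un_le) (use Um in auto)
      have m3: "measure SS (\<Union>j\<in>{..n}. ?K j) \<le> (\<Sum>j\<in>{..n}. measure SS (?K j))"
        by (rule measure_UNION_le) (use Km in auto)
      have m4: "(\<Sum>j\<in>{..n}. measure SS (?K j)) \<le> (\<Sum>j\<in>{..n}. \<alpha> * exp (- \<beta> * ?s))"
      proof (rule sum_mono)
        fix j
        have "ennreal (measure SS (?K j)) \<le> ennreal (\<alpha> * exp (- \<beta> * ?s))"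
          unfolding SSp.emeasure_eq_measure[symmetric]
          using K_bound[OF PC EX EC s0] by simp
        then show "measure SS (?K j) \<le> \<alpha> * exp (- \<beta> * ?s)"
          by (rule ennreal_le_iff[THEN iffD1, rotated]) (use ab in simp)
      qed
      have m5: "(\<Sum>j\<in>{..n}. \<alpha> * exp (- \<beta> * ?s)) = ?g t" by simp
      show ?case using m1 m2 m3 m4 m5 n elim(1) by linarith
    qed
  qed
qed

end


context aoa begin

lemma conv:
  assumes H1: "\<forall>j. \<not> (fst (run (bnd P run \<infinity> j \<omega>) (\<omega> j)) < \<infinity> \<and> cost P (snd (run (bnd P run \<infinity> j \<omega>) (\<omega> j))) < C)"
    and H2: "\<forall>k::nat. \<exists>m::nat. ao_best P run (real m) \<omega> < ereal (C + 1 / real (Suc k))"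
  shows "((\<lambda>t. ao_best P run t \<omega>) \<longlongrightarrow> ereal C) at_top"
proof -
  have lb: "ereal C \<le> ao_best P run t \<omega>" for t
    unfolding ao_best_def
  proof (rule Inf_greatest)
    fix x assume "x \<in> {ereal (cost P (snd (run (ao_bound P run i \<omega>) (\<omega> i)))) | i. ao_finish P run i \<omega> \<le> ennreal t}"
    then obtain i where x: "x = ereal (cost P (snd (run (bnd P run \<infinity> i \<omega>) (\<omega> i))))"
      and f: "ao_finish P run i \<omega> \<le> ennreal t" by (auto simp: ao_bound_bnd)
    have "fst (run (bnd P run \<infinity> i \<omega>) (\<omega> i)) \<le> ao_finish P run i \<omega>"
      unfolding ao_finish_bnd by (rule member_le_sum) auto
    then have "fst (run (bnd P run \<infinity> i \<omega>) (\<omega> i)) \<le> ennreal t" using f by (rule order_trans)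
    then have "fst (run (bnd P run \<infinity> i \<omega>) (\<omega> i)) < \<infinity>"
      using ennreal_less_top[of t] unfolding infinity_ennreal_def by (rule le_less_trans)
    then show "ereal C \<le> x" using spec[OF H1, of i] x by (auto simp: not_less)
  qed
  have mono: "ao_best P run t' \<omega> \<le> ao_best P run t \<omega>" if "t \<le> t'" for t t'
  proof -
    have "\<And>i. ao_finish P run i \<omega> \<le> ennreal t \<Longrightarrow> ao_finish P run i \<omega> \<le> ennreal t'"
      using that by (meson ennreal_leI order_trans)
    then show ?thesis unfolding ao_best_def by (intro Inf_superset_mono) blast
  qed
  show ?thesis
  proof (rule order_tendstoI)
    fix a assume a: "a < ereal C"
    show "eventually (\<lambda>t. a < ao_best P run t \<omega>) at_top"
      by (intro always_eventually allI less_le_trans[OF a lb])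
  next
    fix a assume a: "ereal C < a"
    have "\<exists>k. ereal (C + 1 / real (Suc k)) < a"
    proof (cases a)
      case (real r)
      with a have "0 < r - C" by simp
      then obtain k where "inverse (real (Suc k)) < r - C" using reals_Archimedean by blast
      then show ?thesis using real by (intro exI[of _ k]) (simp add: field_simps)
    next
      case PInf then show ?thesis by simp
    next
      case MInf then show ?thesis using a by simp
    qed
    then obtain k where k: "ereal (C + 1 / real (Suc k)) < a" by blast
    obtain m where m: "ao_best P run (real m) \<omega> < ereal (C + 1 / real (Suc k))" using H2 by blast
    show "eventually (\<lambda>t. ao_best P run t \<omega> < a) at_top"
      using eventually_ge_at_top[of "real m"]
    proof eventually_elim
      case (elim t)
      have "ao_best P run t \<omega> \<le> ao_best P run (real m) \<omega>" by (rule mono[OF elim])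
      also note m
      also note k
      finally show ?case .
    qed
  qed
qed

lemma part2:
  assumes P1: "\<And>\<epsilon>. 0 < \<epsilon> \<Longrightarrow> ((\<lambda>t. measure SS {\<omega> \<in> space SS. ereal (C + \<epsilon>) \<le> ao_best P run t \<omega>}) \<longlongrightarrow> 0) at_top"
    and RF: "\<And>b. AE w in \<Omega>. fst (run b w) < \<infinity> \<longrightarrow> solves_bounded P b (snd (run b w))"
    and LB: "\<And>\<tau>. feasible P \<tau> \<Longrightarrow> C \<le> cost P \<tau>"
  shows "AE \<omega> in SS. ((\<lambda>t. ao_best P run t \<omega>) \<longlongrightarrow> ereal C) at_top"
proof -
  interpret SSp: prob_space SS by (rule SSprob)
  have a: "AE \<omega> in SS. \<forall>j. \<not> (fst (run (bnd P run \<infinity> j \<omega>) (\<omega> j)) < \<infinity> \<and> cost P (snd (run (bnd P run \<infinity> j \<omega>) (\<omega> j))) < C)"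
    unfolding AE_all_countable
  proof
    fix j
    have N: "{\<omega> \<in> space SS. fst (run (bnd P run \<infinity> j \<omega>) (\<omega> j)) < \<infinity> \<and> cost P (snd (run (bnd P run \<infinity> j \<omega>) (\<omega> j))) < C} \<in> sets SS"
      by measurable
    have "emeasure SS {\<omega> \<in> space SS. fst (run (bnd P run \<infinity> j \<omega>) (\<omega> j)) < \<infinity> \<and> cost P (snd (run (bnd P run \<infinity> j \<omega>) (\<omega> j))) < C} = 0"
      using null_bound[OF RF LB, of \<infinity> j] by simp
    then show "AE \<omega> in SS. \<not> (fst (run (bnd P run \<infinity> j \<omega>) (\<omega> j)) < \<infinity> \<and> cost P (snd (run (bnd P run \<infinity> j \<omega>) (\<omega> j))) < C)"
      by (subst AE_iff_measurable[OF N]) auto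
  qed
  have b: "AE \<omega> in SS. \<forall>k::nat. \<exists>m::nat. ao_best P run (real m) \<omega> < ereal (C + 1 / real (Suc k))"
    unfolding AE_all_countable
  proof
    fix k :: nat
    let ?e = "1 / real (Suc k)"
    let ?Bad = "{\<omega> \<in> space SS. \<forall>m::nat. ereal (C + ?e) \<le> ao_best P run (real m) \<omega>}"
    have Nm: "?Bad \<in> sets SS" by measurable
    have lim: "(\<lambda>m::nat. measure SS {\<omega> \<in> space SS. ereal (C + ?e) \<le> ao_best P run (real m) \<omega>}) \<longlonglongrightarrow> 0"
      using filterlim_compose[OF P1 filterlim_real_sequentially, of ?e] by simp
    have "measure SS ?Bad \<le> 0"
    proof (rule LIMSEQ_le_const[OF lim], intro exI allI impI)
      fix m :: nat
      show "measure SS ?Bad \<le> measure SS {\<omega> \<in> space SS. ereal (C + ?e) \<le> ao_best P run (real m) \<omega>}"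
        by (rule SSp.finite_measure_mono) auto
    qed
    then have "measure SS ?Bad = 0" using measure_nonneg[of SS ?Bad] by linarith
    then have "emeasure SS ?Bad = 0" by (simp add: SSp.emeasure_eq_measure)
    then show "AE \<omega> in SS. \<exists>m::nat. ao_best P run (real m) \<omega> < ereal (C + ?e)"
      by (subst AE_iff_measurable[OF Nm]) (auto simp: not_less)
  qed
  from a b show ?thesis
  proof eventually_elim
    case (elim \<omega>)
    then show ?case by (intro conv) auto
  qed
qed

end



theorem theorem4:
  fixes P :: "('x::real_normed_vector, 'u) kdp"
    and \<Omega> :: "'w measure"
    and run :: "ereal \<Rightarrow> 'w \<Rightarrow> ennreal \<times> ('x, 'u) traj"
  assumes "\<exists>\<tau>. feasible P \<tau>"
    and "optimum_attained P"
    and "randomized_feasible_planner P \<Omega> run"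
    and "prob_complete P \<Omega> run"
    and "well_behaved P \<Omega> run"
    and "exp_convergent P \<Omega> run"
  shows "(\<forall>\<epsilon>>0. ((\<lambda>t. measure (PiM UNIV (\<lambda>_::nat. \<Omega>))
              {\<omega> \<in> space (PiM UNIV (\<lambda>_::nat. \<Omega>)).
                 ereal (optimal_cost P + \<epsilon>) \<le> ao_best P run t \<omega>}) \<longlongrightarrow> 0) at_top) \<and>
         (AE \<omega> in PiM UNIV (\<lambda>_::nat. \<Omega>).
           ((\<lambda>t. ao_best P run t \<omega>) \<longlongrightarrow> ereal (optimal_cost P)) at_top)"
proof -
  let ?C = "optimal_cost P"
  from assms(3) have ps: "prob_space \<Omega>"
    and Tm: "(\<lambda>p. fst (run (fst p) (snd p))) \<in> borel_measurable (borel \<Otimes>\<^sub>M \<Omega>)"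
    and Cm: "(\<lambda>p. cost P (snd (run (fst p) (snd p)))) \<in> borel_measurable (borel \<Otimes>\<^sub>M \<Omega>)"
    and RF: "\<forall>cbar. AE w in \<Omega>. fst (run cbar w) < \<infinity> \<longrightarrow> solves_bounded P cbar (snd (run cbar w))"
    unfolding randomized_feasible_planner_def by auto
  interpret aoa P \<Omega> run by (rule aoa.intro[OF ps Tm Cm])
  from assms(2) obtain \<tau>0 where \<tau>0: "feasible P \<tau>0" "\<forall>\<tau>'. feasible P \<tau>' \<longrightarrow> cost P \<tau>0 \<le> cost P \<tau>'"
    unfolding optimum_attained_def by blast
  have Ceq: "?C = cost P \<tau>0"
    unfolding optimal_cost_def by (rule cInf_eq_minimum) (use \<tau>0 in auto)
  have LB: "\<And>\<tau>. feasible P \<tau> \<Longrightarrow> ?C \<le> cost P \<tau>" using Ceq \<tau>0 by auto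
  have EXb: "\<And>b. ereal ?C \<le> b \<Longrightarrow> \<exists>\<tau>. solves_bounded P b \<tau>"
    using Ceq \<tau>0(1) unfolding solves_bounded_def by (intro exI[of _ \<tau>0]) auto
  from assms(5) obtain wt where wt: "wt > 0"
    and WB0: "\<forall>c::real. ?C < c \<longrightarrow>
        (\<integral>\<^sup>+ v. ennreal (cost P (snd (run (ereal c) v)) - ?C) \<partial>\<Omega>) \<le> ennreal ((1 - wt) * (c - ?C))"
    unfolding well_behaved_def by blast
  define q where "q = max 0 (1 - wt)"
  have q: "0 \<le> q" "q < 1" using wt by (auto simp: q_def)
  have WB: "(\<integral>\<^sup>+ v. ennreal (cost P (snd (run (ereal c) v)) - ?C) \<partial>\<Omega>) \<le> ennreal (q * (c - ?C))"
    if c: "?C < c" for c :: real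
  proof -
    have "(1 - wt) * (c - ?C) \<le> q * (c - ?C)" using c by (intro mult_right_mono) (auto simp: q_def)
    then show ?thesis using WB0 c by (meson ennreal_leI order_trans)
  qed
  have P1: "((\<lambda>t. measure (PiM UNIV (\<lambda>_::nat. \<Omega>))
              {\<omega> \<in> space (PiM UNIV (\<lambda>_::nat. \<Omega>)). ereal (?C + \<epsilon>) \<le> ao_best P run t \<omega>}) \<longlongrightarrow> 0) at_top"
    if eps: "0 < \<epsilon>" for \<epsilon> :: real
  proof -
    from assms(6) eps obtain \<alpha> \<beta> where ab: "0 < \<alpha>" "0 < \<beta>"
      and EC: "\<forall>cbar. ereal (?C + \<epsilon>) \<le> cbar \<longrightarrow>
        (\<forall>t\<ge>0. not_found_prob P \<Omega> run cbar t \<le> min 1 (\<alpha> * exp (- \<beta> * t)))"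
      unfolding exp_convergent_def by blast
    have EX: "\<exists>\<tau>. solves_bounded P b \<tau>" if "ereal (?C + \<epsilon>) \<le> b" for b
    proof (rule EXb)
      have "ereal ?C \<le> ereal (?C + \<epsilon>)" using eps by simp
      then show "ereal ?C \<le> b" using that by (rule order_trans)
    qed
    show ?thesis
      by (rule part1[OF eps q WB assms(4) EX ab]) (use EC in auto)
  qed
  have P2: "AE \<omega> in PiM UNIV (\<lambda>_::nat. \<Omega>). ((\<lambda>t. ao_best P run t \<omega>) \<longlongrightarrow> ereal ?C) at_top"
    by (rule part2[OF P1 _ LB]) (use RF in auto)
  show ?thesis using P1 P2 by auto
qed



end
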